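(* Let $n\neq 1$ be a real number, $k_n=n-1$, and $k_0,k_1,k_2\in\mathbb{R}$. On the phase space with canonical coordinates $(r,\phi,p_r,p_\phi)$, $r>0$, restricted to the open set where $\cos(k_n\phi)\sin(k_n\phi)\neq 0$, consider $$H_{na}=\tfrac12 r^{2n}\Big(p_r^2+\tfrac{p_\phi^2}{r^2}\Big)+\frac{k_0}{r^{2k_n}}+r^{2k_n}\Big(\frac{k_1}{\cos^2(k_n\phi)}+\frac{k_2}{\sin^2(k_n\phi)}\Big).$$ With $P_1=r^n\big(p_r\cos(k_n\phi)+\tfrac1r p_\phi\sin(k_n\phi)\big)$ and $P_2=r^n\big(p_r\sin(k_n\phi)-\tfrac1r p_\phi\cos(k_n\phi)\big)$, the functions $$J_{a1}=P_1^2+\frac{2k_0}{r^{2k_n}}\cos^2(k_n\phi)+2k_1r^{2k_n}\sec^2(k_n\phi),\qquad J_{a2}=P_2^2+\frac{2k_0}{r^{2k_n}}\sin^2(k_n\phi)+2k_2r^{2k_n}\csc^2(k_n\phi),$$ $$J_{a3}=p_\phi^2+2\Big(\frac{k_1}{\cos^2(k_n\phi)}+\frac{k_2}{\sin^2(k_n\phi)}\Big)$$ are three independent constants of motion of $H_{na}$, i.e. $\{J_{aj},H_{na}\}=0$ for $j=1,2,3$; hence $H_{na}$ is superintegrable.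
   Context: The Poisson bracket is the canonical one in $(r,\phi,p_r,p_\phi)$. A constant of motion of $H$ is a function $F$ with $\{F,H\}=0$. Superintegrable: admits, besides $H$, two further functionally independent constants of motion. *)

theory Defs
  imports "HOL-Analysis.Analysis"
begin

text \<open>Phase space points are vectors z :: real^4 with canonical coordinates
  z$1 = r, z$2 = phi, z$3 = p_r, z$4 = p_phi.\<close>

definition pd :: "(real^4 \<Rightarrow> real) \<Rightarrow> 4 \<Rightarrow> real^4 \<Rightarrow> real" where
  "pd F i z = deriv (\<lambda>t. F (z + t *\<^sub>R axis i 1)) 0"

definition grad :: "(real^4 \<Rightarrow> real) \<Rightarrow> real^4 \<Rightarrow> real^4" where
  "grad F z = (\<chi> i. pd F i z)"

definition poisson :: "(real^4 \<Rightarrow> real) \<Rightarrow> (real^4 \<Rightarrow> real) \<Rightarrow> real^4 \<Rightarrow> real" where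
  "poisson F G z = pd F 1 z * pd G 3 z - pd F 3 z * pd G 1 z
                 + pd F 2 z * pd G 4 z - pd F 4 z * pd G 2 z"

definition constant_of_motion :: "(real^4) set \<Rightarrow> (real^4 \<Rightarrow> real) \<Rightarrow> (real^4 \<Rightarrow> real) \<Rightarrow> bool" where
  "constant_of_motion D H F \<longleftrightarrow>
     (\<forall>z\<in>D. F differentiable (at z)) \<and> (\<forall>z\<in>D. poisson F H z = 0)"

definition lin_indep3 :: "real^4 \<Rightarrow> real^4 \<Rightarrow> real^4 \<Rightarrow> bool" where
  "lin_indep3 u v w \<longleftrightarrow>
     (\<forall>a b c. a *\<^sub>R u + b *\<^sub>R v + c *\<^sub>R w = 0 \<longrightarrow> a = 0 \<and> b = 0 \<and> c = 0)"

definition funct_indep3 :: "(real^4) set \<Rightarrow> (real^4 \<Rightarrow> real) \<Rightarrow> (real^4 \<Rightarrow> real) \<Rightarrow> (real^4 \<Rightarrow> real) \<Rightarrow> bool" where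
  "funct_indep3 D F G K \<longleftrightarrow>
     (\<exists>U. open U \<and> U \<subseteq> D \<and> D \<subseteq> closure U \<and>
          (\<forall>z\<in>U. lin_indep3 (grad F z) (grad G z) (grad K z)))"

definition superintegrable :: "(real^4) set \<Rightarrow> (real^4 \<Rightarrow> real) \<Rightarrow> bool" where
  "superintegrable D H \<longleftrightarrow>
     (\<exists>F1 F2. constant_of_motion D H F1 \<and> constant_of_motion D H F2 \<and>
              funct_indep3 D H F1 F2)"

definition Hna :: "real \<Rightarrow> real \<Rightarrow> real \<Rightarrow> real \<Rightarrow> real^4 \<Rightarrow> real" where
  "Hna n k0 k1 k2 z = (let r = z$1; ph = z$2; pr = z$3; pph = z$4; kn = n - 1 in
     1/2 * r powr (2*n) * (pr^2 + pph^2 / r^2) + k0 / r powr (2*kn)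
     + r powr (2*kn) * (k1 / (cos (kn*ph))^2 + k2 / (sin (kn*ph))^2))"

definition P1 :: "real \<Rightarrow> real^4 \<Rightarrow> real" where
  "P1 n z = (let r = z$1; ph = z$2; pr = z$3; pph = z$4; kn = n - 1 in
     r powr n * (pr * cos (kn*ph) + 1/r * pph * sin (kn*ph)))"

definition P2 :: "real \<Rightarrow> real^4 \<Rightarrow> real" where
  "P2 n z = (let r = z$1; ph = z$2; pr = z$3; pph = z$4; kn = n - 1 in
     r powr n * (pr * sin (kn*ph) - 1/r * pph * cos (kn*ph)))"

definition Ja1 :: "real \<Rightarrow> real \<Rightarrow> real \<Rightarrow> real^4 \<Rightarrow> real" where
  "Ja1 n k0 k1 z = (let r = z$1; ph = z$2; kn = n - 1 in
     (P1 n z)^2 + 2*k0 / r powr (2*kn) * (cos (kn*ph))^2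
     + 2*k1 * r powr (2*kn) * (1 / cos (kn*ph))^2)"

definition Ja2 :: "real \<Rightarrow> real \<Rightarrow> real \<Rightarrow> real^4 \<Rightarrow> real" where
  "Ja2 n k0 k2 z = (let r = z$1; ph = z$2; kn = n - 1 in
     (P2 n z)^2 + 2*k0 / r powr (2*kn) * (sin (kn*ph))^2
     + 2*k2 * r powr (2*kn) * (1 / sin (kn*ph))^2)"

definition Ja3 :: "real \<Rightarrow> real \<Rightarrow> real \<Rightarrow> real^4 \<Rightarrow> real" where
  "Ja3 n k1 k2 z = (let ph = z$2; pph = z$4; kn = n - 1 in
     pph^2 + 2 * (k1 / (cos (kn*ph))^2 + k2 / (sin (kn*ph))^2))"

definition phase_dom :: "real \<Rightarrow> (real^4) set" where
  "phase_dom n = {z. z$1 > 0 \<and> cos ((n-1) * z$2) * sin ((n-1) * z$2) \<noteq> 0}"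

end

theory Submission
  imports Defs
begin


definition rho :: "real \<Rightarrow> real \<Rightarrow> real" where "rho n r = r powr (2*(n-1))"

lemma rho_pos: "r > 0 \<Longrightarrow> rho n r > 0" by (simp add: rho_def)
lemma rho_nz: "r > 0 \<Longrightarrow> rho n r \<noteq> 0" by (simp add: rho_def)
lemma pow2n: "r > 0 \<Longrightarrow> r powr (2*n) = rho n r * r^2"
proof -
  assume r: "r > 0"
  have e: "r powr 2 = r^2" using r powr_realpow[of r 2] by simp
  have "r powr (2*n) = r powr (2*(n-1) + 2)" by simp
  also have "\<dots> = r powr (2*(n-1)) * r powr 2" by (rule powr_add)
  finally show ?thesis by (simp add: e rho_def)
qed

lemma rho_deriv: "r > 0 \<Longrightarrow> ((rho n) has_real_derivative (2*(n-1)*rho n r / r)) (at r)"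
  unfolding rho_def
  by (rule derivative_eq_intros refl | simp)+ (simp add: powr_diff power2_eq_square power3_eq_cube)

lemmas rho_deriv_chain = rho_deriv[THEN DERIV_chain2, derivative_intros]

lemma vec_nth_hd[derivative_intros]: "((\<lambda>x. x $ i) has_derivative (\<lambda>x. x $ i)) F"
  by (rule bounded_linear_imp_has_derivative) (rule bounded_linear_vec_nth)

lemma pd_loc:
  assumes "open D" "z \<in> D" "\<And>w. w \<in> D \<Longrightarrow> F w = G w"
  shows "pd F i z = pd G i z"
proof -
  have o: "open ((\<lambda>t. z + t *\<^sub>R axis i 1) -` D)"
    by (intro continuous_open_vimage assms(1) continuous_intros)
  have "eventually (\<lambda>t. z + t *\<^sub>R axis i 1 \<in> D) (nhds 0)"
    unfolding eventually_nhds using o assms(2) by (intro exI[of _ "(\<lambda>t. z + t *\<^sub>R axis i 1) -` D"]) auto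
  then show ?thesis unfolding pd_def
    by (intro deriv_cong_ev) (auto elim!: eventually_mono simp: assms(3))
qed

lemma pd1: "pd (\<lambda>w. g (w$1) (w$2) (w$3) (w$4)) 1 z = deriv (\<lambda>t. g (z$1+t) (z$2) (z$3) (z$4)) 0"
  by (simp add: pd_def axis_def)
lemma pd2: "pd (\<lambda>w. g (w$1) (w$2) (w$3) (w$4)) 2 z = deriv (\<lambda>t. g (z$1) (z$2+t) (z$3) (z$4)) 0"
  by (simp add: pd_def axis_def)
lemma pd3: "pd (\<lambda>w. g (w$1) (w$2) (w$3) (w$4)) 3 z = deriv (\<lambda>t. g (z$1) (z$2) (z$3+t) (z$4)) 0"
  by (simp add: pd_def axis_def)
lemma pd4: "pd (\<lambda>w. g (w$1) (w$2) (w$3) (w$4)) 4 z = deriv (\<lambda>t. g (z$1) (z$2) (z$3) (z$4+t)) 0"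
  by (simp add: pd_def axis_def)

lemma open_dom: "open (phase_dom n)"
proof -
  have "phase_dom n = (\<lambda>z. z$1) -` {0<..} \<inter> (\<lambda>z. cos ((n-1) * z$2) * sin ((n-1) * z$2)) -` (-{0})"
    by (auto simp: phase_dom_def)
  also have "open \<dots>"
    by (intro open_Int continuous_open_vimage continuous_intros open_greaterThan open_Compl closed_singleton)
  finally show ?thesis .
qed

lemma diffJa1: "z \<in> phase_dom n \<Longrightarrow> Ja1 n k0 k1 differentiable (at z)"
  unfolding differentiable_def Ja1_def P1_def Let_def phase_dom_def
  by (rule exI) (auto intro!: derivative_eq_intros)



lemma powr_sq: "r > 0 \<Longrightarrow> (r powr n)^2 = rho n r * r^2"
proof -
  assume r: "r > 0"
  have "(r powr n)^2 = r powr n * r powr n" by (simp add: power2_eq_square)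
  also have "\<dots> = r powr (n+n)" by (simp only: powr_add)
  also have "n + n = 2*n" by simp
  finally show ?thesis using pow2n[OF r] by simp
qed
lemma A1: "(r::real) > 0 \<Longrightarrow> 1/2*(R*r^2)*(p^2+q^2/r^2) = 1/2*R*(r^2*p^2+q^2)"
  by (simp add: field_simps)
lemma A2: "(r::real) > 0 \<Longrightarrow> R*r^2*(a*c + 1*b * s/r)^2 = R*(r*a*c + b * s)^2"
  by (simp add: field_simps power2_eq_square)
lemma A5: "(r::real) > 0 \<Longrightarrow> R*r^2*(a*c - 1*b * s/r)^2 = R*(r*a*c - b * s)^2"
  by (simp add: field_simps power2_eq_square)
lemma A3: "(x::real)/R*y = x*y/R" by simp
lemma A4: "(x::real)*(1/c)^2 = x/c^2" by (simp add: power_one_over)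
definition gH :: "real \<Rightarrow> real \<Rightarrow> real \<Rightarrow> real \<Rightarrow> real \<Rightarrow> real \<Rightarrow> real \<Rightarrow> real \<Rightarrow> real" where
  "gH n k0 k1 k2 r f p q = 1/2 * rho n r * (r^2*p^2 + q^2) + k0 / rho n r + rho n r * (k1/(cos((n-1)*f))^2 + k2/(sin((n-1)*f))^2)"

lemma gH_d1: "r > 0 \<Longrightarrow> cos((n-1)*f) \<noteq> 0 \<Longrightarrow> sin((n-1)*f) \<noteq> 0 \<Longrightarrow>
  deriv (\<lambda>t. gH n k0 k1 k2 (r+t) f p q) 0 = (n-1)*rho n r/r*(r^2*p^2+q^2) + rho n r*r*p^2 - 2*(n-1)*k0/(rho n r*r) + 2*(n-1)*rho n r*(k1/(cos((n-1)*f))^2 + k2/(sin((n-1)*f))^2)/r"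
  apply (rule DERIV_imp_deriv)
  unfolding gH_def
  apply (rule derivative_eq_intros refl | simp add: rho_nz)+
  apply (simp add: field_simps rho_nz)?
  apply algebra?
  done

lemma gH_d2: "r > 0 \<Longrightarrow> cos((n-1)*f) \<noteq> 0 \<Longrightarrow> sin((n-1)*f) \<noteq> 0 \<Longrightarrow>
  deriv (\<lambda>t. gH n k0 k1 k2 r (f+t) p q) 0 = rho n r*(2*(n-1)*k1 * sin((n-1)*f)/(cos((n-1)*f))^3 - 2*(n-1)*k2 * cos((n-1)*f)/(sin((n-1)*f))^3)"
  apply (rule DERIV_imp_deriv)
  unfolding gH_def
  apply (rule derivative_eq_intros refl | simp add: rho_nz)+
  apply (simp add: field_simps rho_nz)?
  apply algebra?
  done

lemma gH_d3: "r > 0 \<Longrightarrow> cos((n-1)*f) \<noteq> 0 \<Longrightarrow> sin((n-1)*f) \<noteq> 0 \<Longrightarrow>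
  deriv (\<lambda>t. gH n k0 k1 k2 r f (p+t) q) 0 = rho n r*r^2*p"
  apply (rule DERIV_imp_deriv)
  unfolding gH_def
  apply (rule derivative_eq_intros refl | simp add: rho_nz)+
  apply (simp add: field_simps rho_nz)?
  apply algebra?
  done

lemma gH_d4: "r > 0 \<Longrightarrow> cos((n-1)*f) \<noteq> 0 \<Longrightarrow> sin((n-1)*f) \<noteq> 0 \<Longrightarrow>
  deriv (\<lambda>t. gH n k0 k1 k2 r f p (q+t)) 0 = rho n r*q"
  apply (rule DERIV_imp_deriv)
  unfolding gH_def
  apply (rule derivative_eq_intros refl | simp add: rho_nz)+
  apply (simp add: field_simps rho_nz)?
  apply algebra?
  done

lemma gH_eq: assumes "z \<in> phase_dom n" shows "Hna n k0 k1 k2 z = gH n k0 k1 k2 (z$1) (z$2) (z$3) (z$4)"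
proof -
  have r: "z$1 > 0" using assms by (simp add: phase_dom_def)
  note e = pow2n[OF r] powr_sq[OF r]
  show ?thesis
    unfolding Hna_def gH_def Let_def rho_def[symmetric] power_mult_distrib e
    using r by (simp only: A1[OF r])
qed

lemma gH_pd1: assumes "z \<in> phase_dom n"
  shows "pd (Hna n k0 k1 k2) 1 z = (let r = z$1; f = z$2; p = z$3; q = z$4 in (n-1)*rho n r/r*(r^2*p^2+q^2) + rho n r*r*p^2 - 2*(n-1)*k0/(rho n r*r) + 2*(n-1)*rho n r*(k1/(cos((n-1)*f))^2 + k2/(sin((n-1)*f))^2)/r)"
proof -
  have "pd (Hna n k0 k1 k2) 1 z = pd (\<lambda>w. gH n k0 k1 k2 (w$1) (w$2) (w$3) (w$4)) 1 z"
    by (rule pd_loc[OF open_dom assms]) (rule gH_eq)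
  then show ?thesis using assms unfolding pd1 phase_dom_def by (simp add: gH_d1 Let_def)
qed

lemma gH_pd2: assumes "z \<in> phase_dom n"
  shows "pd (Hna n k0 k1 k2) 2 z = (let r = z$1; f = z$2; p = z$3; q = z$4 in rho n r*(2*(n-1)*k1 * sin((n-1)*f)/(cos((n-1)*f))^3 - 2*(n-1)*k2 * cos((n-1)*f)/(sin((n-1)*f))^3))"
proof -
  have "pd (Hna n k0 k1 k2) 2 z = pd (\<lambda>w. gH n k0 k1 k2 (w$1) (w$2) (w$3) (w$4)) 2 z"
    by (rule pd_loc[OF open_dom assms]) (rule gH_eq)
  then show ?thesis using assms unfolding pd2 phase_dom_def by (simp add: gH_d2 Let_def)
qed

lemma gH_pd3: assumes "z \<in> phase_dom n"
  shows "pd (Hna n k0 k1 k2) 3 z = (let r = z$1; f = z$2; p = z$3; q = z$4 in rho n r*r^2*p)"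
proof -
  have "pd (Hna n k0 k1 k2) 3 z = pd (\<lambda>w. gH n k0 k1 k2 (w$1) (w$2) (w$3) (w$4)) 3 z"
    by (rule pd_loc[OF open_dom assms]) (rule gH_eq)
  then show ?thesis using assms unfolding pd3 phase_dom_def by (simp add: gH_d3 Let_def)
qed

lemma gH_pd4: assumes "z \<in> phase_dom n"
  shows "pd (Hna n k0 k1 k2) 4 z = (let r = z$1; f = z$2; p = z$3; q = z$4 in rho n r*q)"
proof -
  have "pd (Hna n k0 k1 k2) 4 z = pd (\<lambda>w. gH n k0 k1 k2 (w$1) (w$2) (w$3) (w$4)) 4 z"
    by (rule pd_loc[OF open_dom assms]) (rule gH_eq)
  then show ?thesis using assms unfolding pd4 phase_dom_def by (simp add: gH_d4 Let_def)
qed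

definition gJ1 :: "real \<Rightarrow> real \<Rightarrow> real \<Rightarrow> real \<Rightarrow> real \<Rightarrow> real \<Rightarrow> real \<Rightarrow> real" where
  "gJ1 n k0 k1 r f p q = rho n r*(r*p * cos((n-1)*f) + q * sin((n-1)*f))^2 + 2*k0*(cos((n-1)*f))^2/rho n r + 2*k1*rho n r/(cos((n-1)*f))^2"

lemma gJ1_d1: "r > 0 \<Longrightarrow> cos((n-1)*f) \<noteq> 0 \<Longrightarrow> sin((n-1)*f) \<noteq> 0 \<Longrightarrow>
  deriv (\<lambda>t. gJ1 n k0 k1 (r+t) f p q) 0 = 2*(n-1)*rho n r/r*(r*p * cos((n-1)*f) + q * sin((n-1)*f))^2 + 2*rho n r*(r*p * cos((n-1)*f) + q * sin((n-1)*f))*p * cos((n-1)*f) - 4*(n-1)*k0*(cos((n-1)*f))^2/(r*rho n r) + 4*(n-1)*k1*rho n r/(r*(cos((n-1)*f))^2)"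
  apply (rule DERIV_imp_deriv)
  unfolding gJ1_def
  apply (rule derivative_eq_intros refl | simp add: rho_nz)+
  apply (simp add: field_simps rho_nz)?
  apply algebra?
  done

lemma gJ1_d2: "r > 0 \<Longrightarrow> cos((n-1)*f) \<noteq> 0 \<Longrightarrow> sin((n-1)*f) \<noteq> 0 \<Longrightarrow>
  deriv (\<lambda>t. gJ1 n k0 k1 r (f+t) p q) 0 = -2*(n-1)*rho n r*(r*p * cos((n-1)*f) + q * sin((n-1)*f))*(r*p * sin((n-1)*f) - q * cos((n-1)*f)) - 4*(n-1)*k0 * cos((n-1)*f) * sin((n-1)*f)/rho n r + 4*(n-1)*k1*rho n r * sin((n-1)*f)/(cos((n-1)*f))^3"
  apply (rule DERIV_imp_deriv)
  unfolding gJ1_def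
  apply (rule derivative_eq_intros refl | simp add: rho_nz)+
  apply (simp add: field_simps rho_nz)?
  apply algebra?
  done

lemma gJ1_d3: "r > 0 \<Longrightarrow> cos((n-1)*f) \<noteq> 0 \<Longrightarrow> sin((n-1)*f) \<noteq> 0 \<Longrightarrow>
  deriv (\<lambda>t. gJ1 n k0 k1 r f (p+t) q) 0 = 2*rho n r*(r*p * cos((n-1)*f) + q * sin((n-1)*f))*r * cos((n-1)*f)"
  apply (rule DERIV_imp_deriv)
  unfolding gJ1_def
  apply (rule derivative_eq_intros refl | simp add: rho_nz)+
  apply (simp add: field_simps rho_nz)?
  apply algebra?
  done

lemma gJ1_d4: "r > 0 \<Longrightarrow> cos((n-1)*f) \<noteq> 0 \<Longrightarrow> sin((n-1)*f) \<noteq> 0 \<Longrightarrow>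
  deriv (\<lambda>t. gJ1 n k0 k1 r f p (q+t)) 0 = 2*rho n r*(r*p * cos((n-1)*f) + q * sin((n-1)*f)) * sin((n-1)*f)"
  apply (rule DERIV_imp_deriv)
  unfolding gJ1_def
  apply (rule derivative_eq_intros refl | simp add: rho_nz)+
  apply (simp add: field_simps rho_nz)?
  apply algebra?
  done

lemma gJ1_eq: assumes "z \<in> phase_dom n" shows "Ja1 n k0 k1 z = gJ1 n k0 k1 (z$1) (z$2) (z$3) (z$4)"
proof -
  have r: "z$1 > 0" using assms by (simp add: phase_dom_def)
  note e = pow2n[OF r] powr_sq[OF r]
  show ?thesis
    unfolding Ja1_def P1_def gJ1_def Let_def rho_def[symmetric] power_mult_distrib e
    using r by (simp only: A2[OF r] A3 A4)
qed

lemma gJ1_pd1: assumes "z \<in> phase_dom n"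
  shows "pd (Ja1 n k0 k1) 1 z = (let r = z$1; f = z$2; p = z$3; q = z$4 in 2*(n-1)*rho n r/r*(r*p * cos((n-1)*f) + q * sin((n-1)*f))^2 + 2*rho n r*(r*p * cos((n-1)*f) + q * sin((n-1)*f))*p * cos((n-1)*f) - 4*(n-1)*k0*(cos((n-1)*f))^2/(r*rho n r) + 4*(n-1)*k1*rho n r/(r*(cos((n-1)*f))^2))"
proof -
  have "pd (Ja1 n k0 k1) 1 z = pd (\<lambda>w. gJ1 n k0 k1 (w$1) (w$2) (w$3) (w$4)) 1 z"
    by (rule pd_loc[OF open_dom assms]) (rule gJ1_eq)
  then show ?thesis using assms unfolding pd1 phase_dom_def by (simp add: gJ1_d1 Let_def)
qed

lemma gJ1_pd2: assumes "z \<in> phase_dom n"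
  shows "pd (Ja1 n k0 k1) 2 z = (let r = z$1; f = z$2; p = z$3; q = z$4 in -2*(n-1)*rho n r*(r*p * cos((n-1)*f) + q * sin((n-1)*f))*(r*p * sin((n-1)*f) - q * cos((n-1)*f)) - 4*(n-1)*k0 * cos((n-1)*f) * sin((n-1)*f)/rho n r + 4*(n-1)*k1*rho n r * sin((n-1)*f)/(cos((n-1)*f))^3)"
proof -
  have "pd (Ja1 n k0 k1) 2 z = pd (\<lambda>w. gJ1 n k0 k1 (w$1) (w$2) (w$3) (w$4)) 2 z"
    by (rule pd_loc[OF open_dom assms]) (rule gJ1_eq)
  then show ?thesis using assms unfolding pd2 phase_dom_def by (simp add: gJ1_d2 Let_def)
qed

lemma gJ1_pd3: assumes "z \<in> phase_dom n"
  shows "pd (Ja1 n k0 k1) 3 z = (let r = z$1; f = z$2; p = z$3; q = z$4 in 2*rho n r*(r*p * cos((n-1)*f) + q * sin((n-1)*f))*r * cos((n-1)*f))"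
proof -
  have "pd (Ja1 n k0 k1) 3 z = pd (\<lambda>w. gJ1 n k0 k1 (w$1) (w$2) (w$3) (w$4)) 3 z"
    by (rule pd_loc[OF open_dom assms]) (rule gJ1_eq)
  then show ?thesis using assms unfolding pd3 phase_dom_def by (simp add: gJ1_d3 Let_def)
qed

lemma gJ1_pd4: assumes "z \<in> phase_dom n"
  shows "pd (Ja1 n k0 k1) 4 z = (let r = z$1; f = z$2; p = z$3; q = z$4 in 2*rho n r*(r*p * cos((n-1)*f) + q * sin((n-1)*f)) * sin((n-1)*f))"
proof -
  have "pd (Ja1 n k0 k1) 4 z = pd (\<lambda>w. gJ1 n k0 k1 (w$1) (w$2) (w$3) (w$4)) 4 z"
    by (rule pd_loc[OF open_dom assms]) (rule gJ1_eq)
  then show ?thesis using assms unfolding pd4 phase_dom_def by (simp add: gJ1_d4 Let_def)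
qed

definition gJ2 :: "real \<Rightarrow> real \<Rightarrow> real \<Rightarrow> real \<Rightarrow> real \<Rightarrow> real \<Rightarrow> real \<Rightarrow> real" where
  "gJ2 n k0 k2 r f p q = rho n r*(r*p * sin((n-1)*f) - q * cos((n-1)*f))^2 + 2*k0*(sin((n-1)*f))^2/rho n r + 2*k2*rho n r/(sin((n-1)*f))^2"

lemma gJ2_d1: "r > 0 \<Longrightarrow> cos((n-1)*f) \<noteq> 0 \<Longrightarrow> sin((n-1)*f) \<noteq> 0 \<Longrightarrow>
  deriv (\<lambda>t. gJ2 n k0 k2 (r+t) f p q) 0 = 2*(n-1)*rho n r/r*(r*p * sin((n-1)*f) - q * cos((n-1)*f))^2 + 2*rho n r*(r*p * sin((n-1)*f) - q * cos((n-1)*f))*p * sin((n-1)*f) - 4*(n-1)*k0*(sin((n-1)*f))^2/(r*rho n r) + 4*(n-1)*k2*rho n r/(r*(sin((n-1)*f))^2)"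
  apply (rule DERIV_imp_deriv)
  unfolding gJ2_def
  apply (rule derivative_eq_intros refl | simp add: rho_nz)+
  apply (simp add: field_simps rho_nz)?
  apply algebra?
  done

lemma gJ2_d2: "r > 0 \<Longrightarrow> cos((n-1)*f) \<noteq> 0 \<Longrightarrow> sin((n-1)*f) \<noteq> 0 \<Longrightarrow>
  deriv (\<lambda>t. gJ2 n k0 k2 r (f+t) p q) 0 = 2*(n-1)*rho n r*(r*p * sin((n-1)*f) - q * cos((n-1)*f))*(r*p * cos((n-1)*f) + q * sin((n-1)*f)) + 4*(n-1)*k0 * sin((n-1)*f) * cos((n-1)*f)/rho n r - 4*(n-1)*k2*rho n r * cos((n-1)*f)/(sin((n-1)*f))^3"
  apply (rule DERIV_imp_deriv)
  unfolding gJ2_def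
  apply (rule derivative_eq_intros refl | simp add: rho_nz)+
  apply (simp add: field_simps rho_nz)?
  apply algebra?
  done

lemma gJ2_d3: "r > 0 \<Longrightarrow> cos((n-1)*f) \<noteq> 0 \<Longrightarrow> sin((n-1)*f) \<noteq> 0 \<Longrightarrow>
  deriv (\<lambda>t. gJ2 n k0 k2 r f (p+t) q) 0 = 2*rho n r*(r*p * sin((n-1)*f) - q * cos((n-1)*f))*r * sin((n-1)*f)"
  apply (rule DERIV_imp_deriv)
  unfolding gJ2_def
  apply (rule derivative_eq_intros refl | simp add: rho_nz)+
  apply (simp add: field_simps rho_nz)?
  apply algebra?
  done

lemma gJ2_d4: "r > 0 \<Longrightarrow> cos((n-1)*f) \<noteq> 0 \<Longrightarrow> sin((n-1)*f) \<noteq> 0 \<Longrightarrow>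
  deriv (\<lambda>t. gJ2 n k0 k2 r f p (q+t)) 0 = -2*rho n r*(r*p * sin((n-1)*f) - q * cos((n-1)*f)) * cos((n-1)*f)"
  apply (rule DERIV_imp_deriv)
  unfolding gJ2_def
  apply (rule derivative_eq_intros refl | simp add: rho_nz)+
  apply (simp add: field_simps rho_nz)?
  apply algebra?
  done

lemma gJ2_eq: assumes "z \<in> phase_dom n" shows "Ja2 n k0 k2 z = gJ2 n k0 k2 (z$1) (z$2) (z$3) (z$4)"
proof -
  have r: "z$1 > 0" using assms by (simp add: phase_dom_def)
  note e = pow2n[OF r] powr_sq[OF r]
  show ?thesis
    unfolding Ja2_def P2_def gJ2_def Let_def rho_def[symmetric] power_mult_distrib e
    using r by (simp only: A5[OF r] A3 A4)
qed

lemma gJ2_pd1: assumes "z \<in> phase_dom n"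
  shows "pd (Ja2 n k0 k2) 1 z = (let r = z$1; f = z$2; p = z$3; q = z$4 in 2*(n-1)*rho n r/r*(r*p * sin((n-1)*f) - q * cos((n-1)*f))^2 + 2*rho n r*(r*p * sin((n-1)*f) - q * cos((n-1)*f))*p * sin((n-1)*f) - 4*(n-1)*k0*(sin((n-1)*f))^2/(r*rho n r) + 4*(n-1)*k2*rho n r/(r*(sin((n-1)*f))^2))"
proof -
  have "pd (Ja2 n k0 k2) 1 z = pd (\<lambda>w. gJ2 n k0 k2 (w$1) (w$2) (w$3) (w$4)) 1 z"
    by (rule pd_loc[OF open_dom assms]) (rule gJ2_eq)
  then show ?thesis using assms unfolding pd1 phase_dom_def by (simp add: gJ2_d1 Let_def)
qed

lemma gJ2_pd2: assumes "z \<in> phase_dom n"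
  shows "pd (Ja2 n k0 k2) 2 z = (let r = z$1; f = z$2; p = z$3; q = z$4 in 2*(n-1)*rho n r*(r*p * sin((n-1)*f) - q * cos((n-1)*f))*(r*p * cos((n-1)*f) + q * sin((n-1)*f)) + 4*(n-1)*k0 * sin((n-1)*f) * cos((n-1)*f)/rho n r - 4*(n-1)*k2*rho n r * cos((n-1)*f)/(sin((n-1)*f))^3)"
proof -
  have "pd (Ja2 n k0 k2) 2 z = pd (\<lambda>w. gJ2 n k0 k2 (w$1) (w$2) (w$3) (w$4)) 2 z"
    by (rule pd_loc[OF open_dom assms]) (rule gJ2_eq)
  then show ?thesis using assms unfolding pd2 phase_dom_def by (simp add: gJ2_d2 Let_def)
qed

lemma gJ2_pd3: assumes "z \<in> phase_dom n"
  shows "pd (Ja2 n k0 k2) 3 z = (let r = z$1; f = z$2; p = z$3; q = z$4 in 2*rho n r*(r*p * sin((n-1)*f) - q * cos((n-1)*f))*r * sin((n-1)*f))"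
proof -
  have "pd (Ja2 n k0 k2) 3 z = pd (\<lambda>w. gJ2 n k0 k2 (w$1) (w$2) (w$3) (w$4)) 3 z"
    by (rule pd_loc[OF open_dom assms]) (rule gJ2_eq)
  then show ?thesis using assms unfolding pd3 phase_dom_def by (simp add: gJ2_d3 Let_def)
qed

lemma gJ2_pd4: assumes "z \<in> phase_dom n"
  shows "pd (Ja2 n k0 k2) 4 z = (let r = z$1; f = z$2; p = z$3; q = z$4 in -2*rho n r*(r*p * sin((n-1)*f) - q * cos((n-1)*f)) * cos((n-1)*f))"
proof -
  have "pd (Ja2 n k0 k2) 4 z = pd (\<lambda>w. gJ2 n k0 k2 (w$1) (w$2) (w$3) (w$4)) 4 z"
    by (rule pd_loc[OF open_dom assms]) (rule gJ2_eq)
  then show ?thesis using assms unfolding pd4 phase_dom_def by (simp add: gJ2_d4 Let_def)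
qed

definition gJ3 :: "real \<Rightarrow> real \<Rightarrow> real \<Rightarrow> real \<Rightarrow> real \<Rightarrow> real \<Rightarrow> real \<Rightarrow> real" where
  "gJ3 n k1 k2 r f p q = q^2 + 2*(k1/(cos((n-1)*f))^2 + k2/(sin((n-1)*f))^2)"

lemma gJ3_d1: "r > 0 \<Longrightarrow> cos((n-1)*f) \<noteq> 0 \<Longrightarrow> sin((n-1)*f) \<noteq> 0 \<Longrightarrow>
  deriv (\<lambda>t. gJ3 n k1 k2 (r+t) f p q) 0 = 0"
  apply (rule DERIV_imp_deriv)
  unfolding gJ3_def
  apply (rule derivative_eq_intros refl | simp add: rho_nz)+
  apply (simp add: field_simps rho_nz)?
  apply algebra?
  done

lemma gJ3_d2: "r > 0 \<Longrightarrow> cos((n-1)*f) \<noteq> 0 \<Longrightarrow> sin((n-1)*f) \<noteq> 0 \<Longrightarrow>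
  deriv (\<lambda>t. gJ3 n k1 k2 r (f+t) p q) 0 = 2*(2*(n-1)*k1 * sin((n-1)*f)/(cos((n-1)*f))^3 - 2*(n-1)*k2 * cos((n-1)*f)/(sin((n-1)*f))^3)"
  apply (rule DERIV_imp_deriv)
  unfolding gJ3_def
  apply (rule derivative_eq_intros refl | simp add: rho_nz)+
  apply (simp add: field_simps rho_nz)?
  apply algebra?
  done

lemma gJ3_d3: "r > 0 \<Longrightarrow> cos((n-1)*f) \<noteq> 0 \<Longrightarrow> sin((n-1)*f) \<noteq> 0 \<Longrightarrow>
  deriv (\<lambda>t. gJ3 n k1 k2 r f (p+t) q) 0 = 0"
  apply (rule DERIV_imp_deriv)
  unfolding gJ3_def
  apply (rule derivative_eq_intros refl | simp add: rho_nz)+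
  apply (simp add: field_simps rho_nz)?
  apply algebra?
  done

lemma gJ3_d4: "r > 0 \<Longrightarrow> cos((n-1)*f) \<noteq> 0 \<Longrightarrow> sin((n-1)*f) \<noteq> 0 \<Longrightarrow>
  deriv (\<lambda>t. gJ3 n k1 k2 r f p (q+t)) 0 = 2*q"
  apply (rule DERIV_imp_deriv)
  unfolding gJ3_def
  apply (rule derivative_eq_intros refl | simp add: rho_nz)+
  apply (simp add: field_simps rho_nz)?
  apply algebra?
  done

lemma gJ3_eq: assumes "z \<in> phase_dom n" shows "Ja3 n k1 k2 z = gJ3 n k1 k2 (z$1) (z$2) (z$3) (z$4)"
proof -
  have r: "z$1 > 0" using assms by (simp add: phase_dom_def)
  note e = pow2n[OF r] powr_sq[OF r]
  show ?thesis
    unfolding Ja3_def gJ3_def Let_def rho_def[symmetric] power_mult_distrib e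
    using r by (simp only:)
qed

lemma gJ3_pd1: assumes "z \<in> phase_dom n"
  shows "pd (Ja3 n k1 k2) 1 z = (let r = z$1; f = z$2; p = z$3; q = z$4 in 0)"
proof -
  have "pd (Ja3 n k1 k2) 1 z = pd (\<lambda>w. gJ3 n k1 k2 (w$1) (w$2) (w$3) (w$4)) 1 z"
    by (rule pd_loc[OF open_dom assms]) (rule gJ3_eq)
  then show ?thesis using assms unfolding pd1 phase_dom_def by (simp add: gJ3_d1 Let_def)
qed

lemma gJ3_pd2: assumes "z \<in> phase_dom n"
  shows "pd (Ja3 n k1 k2) 2 z = (let r = z$1; f = z$2; p = z$3; q = z$4 in 2*(2*(n-1)*k1 * sin((n-1)*f)/(cos((n-1)*f))^3 - 2*(n-1)*k2 * cos((n-1)*f)/(sin((n-1)*f))^3))"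
proof -
  have "pd (Ja3 n k1 k2) 2 z = pd (\<lambda>w. gJ3 n k1 k2 (w$1) (w$2) (w$3) (w$4)) 2 z"
    by (rule pd_loc[OF open_dom assms]) (rule gJ3_eq)
  then show ?thesis using assms unfolding pd2 phase_dom_def by (simp add: gJ3_d2 Let_def)
qed

lemma gJ3_pd3: assumes "z \<in> phase_dom n"
  shows "pd (Ja3 n k1 k2) 3 z = (let r = z$1; f = z$2; p = z$3; q = z$4 in 0)"
proof -
  have "pd (Ja3 n k1 k2) 3 z = pd (\<lambda>w. gJ3 n k1 k2 (w$1) (w$2) (w$3) (w$4)) 3 z"
    by (rule pd_loc[OF open_dom assms]) (rule gJ3_eq)
  then show ?thesis using assms unfolding pd3 phase_dom_def by (simp add: gJ3_d3 Let_def)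
qed

lemma gJ3_pd4: assumes "z \<in> phase_dom n"
  shows "pd (Ja3 n k1 k2) 4 z = (let r = z$1; f = z$2; p = z$3; q = z$4 in 2*q)"
proof -
  have "pd (Ja3 n k1 k2) 4 z = pd (\<lambda>w. gJ3 n k1 k2 (w$1) (w$2) (w$3) (w$4)) 4 z"
    by (rule pd_loc[OF open_dom assms]) (rule gJ3_eq)
  then show ?thesis using assms unfolding pd4 phase_dom_def by (simp add: gJ3_d4 Let_def)
qed
lemma pb_gJ1: fixes r rh c s p q n k0 k1 k2 :: real
  assumes "r > 0" "rh > 0" "c \<noteq> 0" "s \<noteq> 0" "c^2 + s^2 = 1"
  shows "(2*(n-1)*rh/r*(r*p * c + q * s)^2 + 2*rh*(r*p * c + q * s)*p * c - 4*(n-1)*k0*(c)^2/(r*rh) + 4*(n-1)*k1*rh/(r*(c)^2))*(rh*r^2*p) - (2*rh*(r*p * c + q * s)*r * c)*((n-1)*rh/r*(r^2*p^2+q^2) + rh*r*p^2 - 2*(n-1)*k0/(rh*r) + 2*(n-1)*rh*(k1/(c)^2 + k2/(s)^2)/r) + (-2*(n-1)*rh*(r*p * c + q * s)*(r*p * s - q * c) - 4*(n-1)*k0 * c * s/rh + 4*(n-1)*k1*rh * s/(c)^3)*(rh*q) - (2*rh*(r*p * c + q * s) * s)*(rh*(2*(n-1)*k1 * s/(c)^3 - 2*(n-1)*k2 * c/(s)^3)) = 0"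
  using assms by (simp add: field_simps) algebra

lemma pb_gJ2: fixes r rh c s p q n k0 k1 k2 :: real
  assumes "r > 0" "rh > 0" "c \<noteq> 0" "s \<noteq> 0" "c^2 + s^2 = 1"
  shows "(2*(n-1)*rh/r*(r*p * s - q * c)^2 + 2*rh*(r*p * s - q * c)*p * s - 4*(n-1)*k0*(s)^2/(r*rh) + 4*(n-1)*k2*rh/(r*(s)^2))*(rh*r^2*p) - (2*rh*(r*p * s - q * c)*r * s)*((n-1)*rh/r*(r^2*p^2+q^2) + rh*r*p^2 - 2*(n-1)*k0/(rh*r) + 2*(n-1)*rh*(k1/(c)^2 + k2/(s)^2)/r) + (2*(n-1)*rh*(r*p * s - q * c)*(r*p * c + q * s) + 4*(n-1)*k0 * s * c/rh - 4*(n-1)*k2*rh * c/(s)^3)*(rh*q) - (-2*rh*(r*p * s - q * c) * c)*(rh*(2*(n-1)*k1 * s/(c)^3 - 2*(n-1)*k2 * c/(s)^3)) = 0"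
  using assms by (simp add: field_simps) algebra

lemma pb_gJ3: fixes r rh c s p q n k0 k1 k2 :: real
  assumes "r > 0" "rh > 0" "c \<noteq> 0" "s \<noteq> 0" "c^2 + s^2 = 1"
  shows "(0)*(rh*r^2*p) - (0)*((n-1)*rh/r*(r^2*p^2+q^2) + rh*r*p^2 - 2*(n-1)*k0/(rh*r) + 2*(n-1)*rh*(k1/(c)^2 + k2/(s)^2)/r) + (2*(2*(n-1)*k1 * s/(c)^3 - 2*(n-1)*k2 * c/(s)^3))*(rh*q) - (2*q)*(rh*(2*(n-1)*k1 * s/(c)^3 - 2*(n-1)*k2 * c/(s)^3)) = 0"
  using assms by (simp add: field_simps)

lemma det_uw: fixes r rh c s p q n k0 k1 k2 u w :: real
  assumes "r > 0" "rh > 0" "c \<noteq> 0" "s \<noteq> 0"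
  shows "(2*(n-1)*rh/r*u^2 + 2*rh*u*p * c - 4*(n-1)*k0*(c)^2/(r*rh) + 4*(n-1)*k1*rh/(r*(c)^2))*(2*rh*w*r * s) - (2*rh*u*r * c)*(2*(n-1)*rh/r*w^2 + 2*rh*w*p * s - 4*(n-1)*k0*(s)^2/(r*rh) + 4*(n-1)*k2*rh/(r*(s)^2)) = 4*(n-1)*rh*(rh*(s*u - c*w)*u*w + 2*k0*c* s*(s*u - c*w)/rh + 2*rh*(k1* s*w/c^2 - k2*c*u/s^2))"
  using assms by (simp add: field_simps) algebra

lemma det_alg: fixes r rh c s p q n k0 k1 k2 :: real
  assumes "r > 0" "rh > 0" "c \<noteq> 0" "s \<noteq> 0" "c^2 + s^2 = 1"
  shows "(2*(n-1)*rh/r*(r*p * c + q * s)^2 + 2*rh*(r*p * c + q * s)*p * c - 4*(n-1)*k0*(c)^2/(r*rh) + 4*(n-1)*k1*rh/(r*(c)^2))*(2*rh*(r*p * s - q * c)*r * s) - (2*rh*(r*p * c + q * s)*r * c)*(2*(n-1)*rh/r*(r*p * s - q * c)^2 + 2*rh*(r*p * s - q * c)*p * s - 4*(n-1)*k0*(s)^2/(r*rh) + 4*(n-1)*k2*rh/(r*(s)^2)) = 4*(n-1)*rh*(rh*q*(r*p*c + q* s)*(r*p* s - q*c) + 2*k0*c* s*q/rh + 2*rh*(k1* s*(r*p* s - q*c)/c^2 - k2*c*(r*p*c + q* s)/s^2))"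
proof -
  have q: "s*(r*p*c + q* s) - c*(r*p* s - q*c) = q" using assms(5) by algebra
  show ?thesis using det_uw[OF assms(1-4), where u="(r*p*c + q* s)" and w="(r*p* s - q*c)"] unfolding q .
qed

lemma quad_alg: fixes r rh c s p q n k0 k1 k2 :: real
  assumes "r > 0" "rh > 0" "c \<noteq> 0" "s \<noteq> 0" "c^2 + s^2 = 1"
  shows "(rh*q*(r*p*c + q* s)*(r*p* s - q*c) + 2*k0*c* s*q/rh + 2*rh*(k1* s*(r*p* s - q*c)/c^2 - k2*c*(r*p*c + q* s)/s^2)) = (rh*q*r^2*c* s)*p^2 + (rh*q^2*r*(s^2-c^2) + 2*rh*k1*r* s^2/c^2 - 2*rh*k2*r*c^2/s^2)*p + (-rh*q^3*c* s + 2*k0*c* s*q/rh - 2*rh*k1* s*q/c - 2*rh*k2*c*q/s)"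
  using assms(1-4) by (simp add: field_simps) algebra

lemma hsum_0: fixes r rh c s p q n k0 k1 k2 :: real
  assumes "r > 0" "rh > 0" "c \<noteq> 0" "s \<noteq> 0" "c^2 + s^2 = 1"
  shows "(n-1)*rh/r*(r^2*p^2+q^2) + rh*r*p^2 - 2*(n-1)*k0/(rh*r) + 2*(n-1)*rh*(k1/(c)^2 + k2/(s)^2)/r = ((2*(n-1)*rh/r*(r*p * c + q * s)^2 + 2*rh*(r*p * c + q * s)*p * c - 4*(n-1)*k0*(c)^2/(r*rh) + 4*(n-1)*k1*rh/(r*(c)^2)) + (2*(n-1)*rh/r*(r*p * s - q * c)^2 + 2*rh*(r*p * s - q * c)*p * s - 4*(n-1)*k0*(s)^2/(r*rh) + 4*(n-1)*k2*rh/(r*(s)^2)))/2"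
  using assms by (simp add: field_simps) algebra

lemma hsum_2: fixes r rh c s p q n k0 k1 k2 :: real
  assumes "r > 0" "rh > 0" "c \<noteq> 0" "s \<noteq> 0" "c^2 + s^2 = 1"
  shows "rh*r^2*p = ((2*rh*(r*p * c + q * s)*r * c) + (2*rh*(r*p * s - q * c)*r * s))/2"
  using assms by (simp add: field_simps) algebra

lemma hsum_3: fixes r rh c s p q n k0 k1 k2 :: real
  assumes "r > 0" "rh > 0" "c \<noteq> 0" "s \<noteq> 0" "c^2 + s^2 = 1"
  shows "rh*q = ((2*rh*(r*p * c + q * s) * s) + (-2*rh*(r*p * s - q * c) * c))/2"
  using assms by (simp add: field_simps) algebra

lemma three_roots: fixes a b g t1 t2 t3 :: real
  assumes "a \<noteq> 0" "t1 \<noteq> t2" "t1 \<noteq> t3" "t2 \<noteq> t3"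
    "a*t1^2 + b*t1 + g = 0" "a*t2^2 + b*t2 + g = 0" "a*t3^2 + b*t3 + g = 0"
  shows False
proof -
  have "(t1 - t2)*(a*(t1+t2) + b) = 0" using assms(5,6) by (simp add: algebra_simps power2_eq_square)
  then have 1: "a*(t1+t2) + b = 0" using assms(2) by simp
  have "(t1 - t3)*(a*(t1+t3) + b) = 0" using assms(5,7) by (simp add: algebra_simps power2_eq_square)
  then have 2: "a*(t1+t3) + b = 0" using assms(3) by simp
  have "a*(t2 - t3) = (a*(t1+t2) + b) - (a*(t1+t3) + b)" by (simp add: algebra_simps)
  with 1 2 have "a*(t2 - t3) = 0" by simp
  then show False using assms(1,4) by simp
qed

lemma lin2: fixes a b x1 y1 x3 y3 :: real
  assumes "a*x1 + b*y1 = 0" "a*x3 + b*y3 = 0" "x1*y3 - x3*y1 \<noteq> 0"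
  shows "a = 0 \<and> b = 0"
proof -
  have "a*(x1*y3 - x3*y1) = 0" using assms(1,2)
    by algebra
  moreover have "b*(x1*y3 - x3*y1) = 0" using assms(1,2)
    by algebra
  ultimately show ?thesis using assms(3) by simp
qed





lemma dom_facts: assumes "z \<in> phase_dom n"
  shows "z$1 > 0" "cos((n-1)*z$2) \<noteq> 0" "sin((n-1)*z$2) \<noteq> 0" "rho n (z$1) > 0"
  using assms by (auto simp: phase_dom_def rho_pos)

lemma sc1: "(cos x)^2 + (sin x)^2 = (1::real)" by simp

lemma pois_J1: assumes "z \<in> phase_dom n" shows "poisson (Ja1 n k0 k1) (Hna n k0 k1 k2) z = 0"
  unfolding poisson_def gJ1_pd1[OF assms] gJ1_pd2[OF assms] gJ1_pd3[OF assms] gJ1_pd4[OF assms]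
    gH_pd1[OF assms] gH_pd2[OF assms] gH_pd3[OF assms] gH_pd4[OF assms] Let_def
  by (rule pb_gJ1[OF dom_facts(1)[OF assms] dom_facts(4)[OF assms] dom_facts(2)[OF assms] dom_facts(3)[OF assms] sc1])

lemma pois_J2: assumes "z \<in> phase_dom n" shows "poisson (Ja2 n k0 k2) (Hna n k0 k1 k2) z = 0"
  unfolding poisson_def gJ2_pd1[OF assms] gJ2_pd2[OF assms] gJ2_pd3[OF assms] gJ2_pd4[OF assms]
    gH_pd1[OF assms] gH_pd2[OF assms] gH_pd3[OF assms] gH_pd4[OF assms] Let_def
  by (rule pb_gJ2[OF dom_facts(1)[OF assms] dom_facts(4)[OF assms] dom_facts(2)[OF assms] dom_facts(3)[OF assms] sc1])

lemma pois_J3: assumes "z \<in> phase_dom n" shows "poisson (Ja3 n k1 k2) (Hna n k0 k1 k2) z = 0"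
  unfolding poisson_def gJ3_pd1[OF assms] gJ3_pd2[OF assms] gJ3_pd3[OF assms] gJ3_pd4[OF assms]
    gH_pd1[OF assms] gH_pd2[OF assms] gH_pd3[OF assms] gH_pd4[OF assms] Let_def
  by (rule pb_gJ3[OF dom_facts(1)[OF assms] dom_facts(4)[OF assms] dom_facts(2)[OF assms] dom_facts(3)[OF assms] sc1])

lemma diffJa2: "z \<in> phase_dom n \<Longrightarrow> Ja2 n k0 k2 differentiable (at z)"
  unfolding differentiable_def Ja2_def P2_def Let_def phase_dom_def
  by (rule exI) (auto intro!: derivative_eq_intros)

lemma diffJa3: "z \<in> phase_dom n \<Longrightarrow> Ja3 n k1 k2 differentiable (at z)"
  unfolding differentiable_def Ja3_def Let_def phase_dom_def
  by (rule exI) (auto intro!: derivative_eq_intros)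

lemma com1: "constant_of_motion (phase_dom n) (Hna n k0 k1 k2) (Ja1 n k0 k1)"
  unfolding constant_of_motion_def using diffJa1 pois_J1 by blast
lemma com2: "constant_of_motion (phase_dom n) (Hna n k0 k1 k2) (Ja2 n k0 k2)"
  unfolding constant_of_motion_def using diffJa2 pois_J2 by blast
lemma com3: "constant_of_motion (phase_dom n) (Hna n k0 k1 k2) (Ja3 n k1 k2)"
  unfolding constant_of_motion_def using diffJa3 pois_J3 by blast




definition bfun :: "real \<Rightarrow> real \<Rightarrow> real \<Rightarrow> real \<Rightarrow> real^4 \<Rightarrow> real" where
  "bfun n k0 k1 k2 z = (let r = z$1; f = z$2; p = z$3; q = z$4; rh = rho n r; c = cos((n-1)*f); s = sin((n-1)*f) in
     (rh*q*(r*p*c + q * s)*(r*p * s - q*c) + 2*k0*c * s*q/rh + 2*rh*(k1 * s*(r*p * s - q*c)/c^2 - k2*c*(r*p*c + q * s)/ s^2)))"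

definition UU :: "real \<Rightarrow> real \<Rightarrow> real \<Rightarrow> real \<Rightarrow> (real^4) set" where
  "UU n k0 k1 k2 = phase_dom n \<inter> (\<lambda>z. z$4 * bfun n k0 k1 k2 z) -` (-{0})"

lemma det_pd: assumes "z \<in> phase_dom n"
  shows "pd (Ja1 n k0 k1) 1 z * pd (Ja2 n k0 k2) 3 z - pd (Ja1 n k0 k1) 3 z * pd (Ja2 n k0 k2) 1 z
    = 4*(n-1)*rho n (z$1) * bfun n k0 k1 k2 z"
  unfolding gJ1_pd1[OF assms] gJ1_pd3[OF assms] gJ2_pd1[OF assms] gJ2_pd3[OF assms] bfun_def Let_def
  by (rule det_alg[OF dom_facts(1)[OF assms] dom_facts(4)[OF assms] dom_facts(2)[OF assms] dom_facts(3)[OF assms] sc1])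

lemma indep_core:
  assumes n: "n \<noteq> 1" and z: "z \<in> UU n k0 k1 k2"
    and e1: "a * pd (Ja1 n k0 k1) 1 z + b * pd (Ja2 n k0 k2) 1 z = 0"
    and e3: "a * pd (Ja1 n k0 k1) 3 z + b * pd (Ja2 n k0 k2) 3 z = 0"
  shows "a = 0 \<and> b = 0"
proof -
  have zD: "z \<in> phase_dom n" and nz: "z$4 * bfun n k0 k1 k2 z \<noteq> 0" using z by (auto simp: UU_def)
  have "4*(n-1)*rho n (z$1) * bfun n k0 k1 k2 z \<noteq> 0"
    using nz n dom_facts(4)[OF zD] by simp
  then show ?thesis using lin2[OF e1 e3] det_pd[OF zD] by simp
qed

lemma J3_pd: assumes "z \<in> phase_dom n"
  shows "pd (Ja3 n k1 k2) 1 z = 0" "pd (Ja3 n k1 k2) 3 z = 0" "pd (Ja3 n k1 k2) 4 z = 2 * z$4"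
  using gJ3_pd1[OF assms] gJ3_pd3[OF assms] gJ3_pd4[OF assms] by (simp_all add: Let_def)

lemma H_pd: assumes "z \<in> phase_dom n"
  shows "pd (Hna n k0 k1 k2) 1 z = (pd (Ja1 n k0 k1) 1 z + pd (Ja2 n k0 k2) 1 z)/2"
        "pd (Hna n k0 k1 k2) 3 z = (pd (Ja1 n k0 k1) 3 z + pd (Ja2 n k0 k2) 3 z)/2"
  unfolding gH_pd1[OF assms] gH_pd3[OF assms] gJ1_pd1[OF assms] gJ1_pd3[OF assms] gJ2_pd1[OF assms] gJ2_pd3[OF assms] Let_def
  by (rule hsum_0[OF dom_facts(1)[OF assms] dom_facts(4)[OF assms] dom_facts(2)[OF assms] dom_facts(3)[OF assms] sc1],
      rule hsum_2[OF dom_facts(1)[OF assms] dom_facts(4)[OF assms] dom_facts(2)[OF assms] dom_facts(3)[OF assms] sc1])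

lemma comp_eq: assumes "a *\<^sub>R u + b *\<^sub>R v + c *\<^sub>R w = (0::real^4)"
  shows "a * u$i + b * v$i + c * w$i = 0"
  using arg_cong[OF assms, of "\<lambda>x. x $ i"] by simp

lemma indepJ: assumes n: "n \<noteq> 1" and z: "z \<in> UU n k0 k1 k2"
  shows "lin_indep3 (grad (Ja1 n k0 k1) z) (grad (Ja2 n k0 k2) z) (grad (Ja3 n k1 k2) z)"
  unfolding lin_indep3_def
proof (intro allI impI)
  fix a b c assume h: "a *\<^sub>R grad (Ja1 n k0 k1) z + b *\<^sub>R grad (Ja2 n k0 k2) z + c *\<^sub>R grad (Ja3 n k1 k2) z = 0"
  have zD: "z \<in> phase_dom n" and nz: "z$4 \<noteq> 0" using z by (auto simp: UU_def)
  note c1 = comp_eq[OF h, of 1] and c3 = comp_eq[OF h, of 3] and c4 = comp_eq[OF h, of 4]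
  have ab: "a = 0 \<and> b = 0"
    using c1 c3 J3_pd[OF zD] by (intro indep_core[OF n z]) (simp_all add: grad_def)
  then have "c * (2 * z$4) = 0" using c4 J3_pd[OF zD] by (simp add: grad_def)
  then show "a = 0 \<and> b = 0 \<and> c = 0" using ab nz by simp
qed

lemma indepH: assumes n: "n \<noteq> 1" and z: "z \<in> UU n k0 k1 k2"
  shows "lin_indep3 (grad (Hna n k0 k1 k2) z) (grad (Ja1 n k0 k1) z) (grad (Ja3 n k1 k2) z)"
  unfolding lin_indep3_def
proof (intro allI impI)
  fix a b c assume h: "a *\<^sub>R grad (Hna n k0 k1 k2) z + b *\<^sub>R grad (Ja1 n k0 k1) z + c *\<^sub>R grad (Ja3 n k1 k2) z = 0"
  have zD: "z \<in> phase_dom n" and nz: "z$4 \<noteq> 0" using z by (auto simp: UU_def)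
  note c1 = comp_eq[OF h, of 1] and c3 = comp_eq[OF h, of 3] and c4 = comp_eq[OF h, of 4]
  have e1: "(a/2 + b) * pd (Ja1 n k0 k1) 1 z + (a/2) * pd (Ja2 n k0 k2) 1 z = 0"
    using c1 J3_pd[OF zD] H_pd[OF zD] by (simp add: grad_def algebra_simps add_divide_distrib)
  have e3: "(a/2 + b) * pd (Ja1 n k0 k1) 3 z + (a/2) * pd (Ja2 n k0 k2) 3 z = 0"
    using c3 J3_pd[OF zD] H_pd[OF zD] by (simp add: grad_def algebra_simps add_divide_distrib)
  have ab: "a = 0 \<and> b = 0" using indep_core[OF n z e1 e3] by simp
  then have "c * (2 * z$4) = 0" using c4 J3_pd[OF zD] by (simp add: grad_def)
  then show "a = 0 \<and> b = 0 \<and> c = 0" using ab nz by simp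
qed




lemma open_UU: "open (UU n k0 k1 k2)"
proof -
  have "\<forall>z\<in>phase_dom n. isCont (\<lambda>z. z$4 * bfun n k0 k1 k2 z) z"
  proof
    fix z assume zD: "z \<in> phase_dom n"
    note f = dom_facts[OF zD]
    show "isCont (\<lambda>z. z$4 * bfun n k0 k1 k2 z) z"
      unfolding bfun_def Let_def rho_def
      using f by (auto intro!: continuous_intros simp: rho_def)
  qed
  then have "continuous_on (phase_dom n) (\<lambda>z. z$4 * bfun n k0 k1 k2 z)"
    by (rule continuous_at_imp_continuous_on)
  then show ?thesis unfolding UU_def
    by (rule continuous_open_preimage[OF _ open_dom]) auto
qed

lemma dense_UU: assumes zD: "z \<in> phase_dom n" shows "z \<in> closure (UU n k0 k1 k2)"
  unfolding closure_approachable
proof (intro allI impI)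
  fix e :: real assume e: "e > 0"
  define q' where "q' = (if z$4 = 0 then e/4 else z$4)"
  have q'nz: "q' \<noteq> 0" and q'd: "\<bar>q' - z$4\<bar> \<le> e/4" using e by (auto simp: q'_def)
  define y where "y t = z + (q' - z$4) *\<^sub>R axis 4 1 + t *\<^sub>R axis 3 1" for t
  have y1: "y t $ 1 = z$1" "y t $ 2 = z$2" "y t $ 3 = z$3 + t" "y t $ 4 = q'" for t
    by (simp_all add: y_def axis_def)
  have yD: "y t \<in> phase_dom n" for t using zD by (simp add: phase_dom_def y1)
  note f = dom_facts[OF zD]
  define r where "r = z$1"
  define rh where "rh = rho n r"
  define c where "c = cos((n-1)*z$2)"
  define s where "s = sin((n-1)*z$2)"
  have rp: "r > 0" and rhp: "rh > 0" and cnz: "c \<noteq> 0" and snz: "s \<noteq> 0" and sc: "c^2 + s^2 = 1"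
    using f by (simp_all add: rh_def c_def s_def r_def)
  define al where "al = rh*q'*r^2*c * s"
  define be where "be = (rh*q'^2*r*(s^2-c^2) + 2*rh*k1*r * s^2/c^2 - 2*rh*k2*r*c^2/ s^2)"
  define ga where "ga = (-rh*q'^3*c * s + 2*k0*c * s*q'/rh - 2*rh*k1 * s*q'/c - 2*rh*k2*c*q'/ s)"
  have quad: "bfun n k0 k1 k2 (y t) = al*(z$3+t)^2 + be*(z$3+t) + ga" for t
    unfolding bfun_def Let_def y1 al_def be_def ga_def
    unfolding c_def[symmetric] s_def[symmetric] r_def[symmetric]
    unfolding rh_def[symmetric]
    by (rule quad_alg[OF rp rhp cnz snz sc])
  have alnz: "al \<noteq> 0" using rp rhp cnz snz q'nz by (simp add: al_def)
  have "\<exists>t\<in>{e/8, e/16, e/32}. bfun n k0 k1 k2 (y t) \<noteq> 0"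
  proof (rule ccontr)
    assume "\<not> ?thesis"
    then have "al*(z$3+t)^2 + be*(z$3+t) + ga = 0" if "t \<in> {e/8, e/16, e/32}" for t
      using that quad by auto
    then show False
      using three_roots[OF alnz, of "z$3 + e/8" "z$3 + e/16" "z$3 + e/32" be ga] e by auto
  qed
  then obtain t where t: "t \<in> {e/8, e/16, e/32}" and bnz: "bfun n k0 k1 k2 (y t) \<noteq> 0" by blast
  have yU: "y t \<in> UU n k0 k1 k2" using yD bnz q'nz by (simp add: UU_def y1)
  have "dist (y t) z = norm ((q' - z$4) *\<^sub>R axis (4::4) (1::real) + t *\<^sub>R axis (3::4) 1)"
    by (simp add: y_def dist_norm)
  also have "\<dots> \<le> norm ((q' - z$4) *\<^sub>R axis (4::4) (1::real)) + norm (t *\<^sub>R axis (3::4) (1::real))"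
    by (rule norm_triangle_ineq)
  also have "\<dots> = \<bar>q' - z$4\<bar> + \<bar>t\<bar>" by simp
  also have "\<dots> < e" using q'd t e by auto
  finally have "dist (y t) z < e" .
  with yU show "\<exists>x\<in>UU n k0 k1 k2. dist x z < e" by (rule bexI[rotated])
qed

lemma UU_sub: "UU n k0 k1 k2 \<subseteq> phase_dom n" by (auto simp: UU_def)


theorem mainTheorem2:
  fixes n k0 k1 k2 :: real
  assumes "n \<noteq> 1"
  shows "constant_of_motion (phase_dom n) (Hna n k0 k1 k2) (Ja1 n k0 k1)
       \<and> constant_of_motion (phase_dom n) (Hna n k0 k1 k2) (Ja2 n k0 k2)
       \<and> constant_of_motion (phase_dom n) (Hna n k0 k1 k2) (Ja3 n k1 k2)
       \<and> funct_indep3 (phase_dom n) (Ja1 n k0 k1) (Ja2 n k0 k2) (Ja3 n k1 k2)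
       \<and> superintegrable (phase_dom n) (Hna n k0 k1 k2)"
proof -
  have fi: "funct_indep3 (phase_dom n) (Ja1 n k0 k1) (Ja2 n k0 k2) (Ja3 n k1 k2)"
    unfolding funct_indep3_def
  proof (intro exI[of _ "UU n k0 k1 k2"] conjI)
    show "open (UU n k0 k1 k2)" by (rule open_UU)
    show "UU n k0 k1 k2 \<subseteq> phase_dom n" by (rule UU_sub)
    show "phase_dom n \<subseteq> closure (UU n k0 k1 k2)" using dense_UU by blast
    show "\<forall>z\<in>UU n k0 k1 k2. lin_indep3 (grad (Ja1 n k0 k1) z) (grad (Ja2 n k0 k2) z) (grad (Ja3 n k1 k2) z)"
      using indepJ[OF assms] by blast
  qed
  have "funct_indep3 (phase_dom n) (Hna n k0 k1 k2) (Ja1 n k0 k1) (Ja3 n k1 k2)"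
    unfolding funct_indep3_def
  proof (intro exI[of _ "UU n k0 k1 k2"] conjI)
    show "open (UU n k0 k1 k2)" by (rule open_UU)
    show "UU n k0 k1 k2 \<subseteq> phase_dom n" by (rule UU_sub)
    show "phase_dom n \<subseteq> closure (UU n k0 k1 k2)" using dense_UU by blast
    show "\<forall>z\<in>UU n k0 k1 k2. lin_indep3 (grad (Hna n k0 k1 k2) z) (grad (Ja1 n k0 k1) z) (grad (Ja3 n k1 k2) z)"
      using indepH[OF assms] by blast
  qed
  then have si: "superintegrable (phase_dom n) (Hna n k0 k1 k2)"
    unfolding superintegrable_def using com1[of n k0 k1 k2] com3[of n k0 k1 k2] by blast
  show ?thesis using com1[of n k0 k1 k2] com2[of n k0 k1 k2] com3[of n k0 k1 k2] fi si by blast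
qed

end
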